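(* (i) For real $p\neq 0$, the inequality $\frac{1}{3}\left( \frac{\sin x}{x}\right) ^{4p}+\frac{2}{3}\left( \frac{\tan x}{x}\right) ^{p}>1$ holds for all $x\in(0,\pi/2)$ if and only if $p>0$ or $p\leq -\frac{\ln 3}{4(\ln \pi -\ln 2)}$. (ii) The reverse inequality $\frac{1}{3}\left( \frac{\sin x}{x}\right) ^{4p}+\frac{2}{3}\left( \frac{\tan x}{x}\right) ^{p}<1$ holds for all $x\in(0,\pi/2)$ if and only if $-2/5\leq p<0$. *)

theory Defs
  imports Complex_Main
begin

end

theory Submission
  imports Defs "HOL-Analysis.Analysis"
begin


fun peval :: "int list \<Rightarrow> real \<Rightarrow> real" where
  "peval [] y = 0"
| "peval (c#cs) y = of_int c + y * peval cs y"

fun padd :: "int list \<Rightarrow> int list \<Rightarrow> int list" where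
  "padd [] bs = bs"
| "padd as [] = as"
| "padd (a#as) (b#bs) = (a+b) # padd as bs"

lemma peval_padd[simp]: "peval (padd as bs) y = peval as y + peval bs y"
  by (induction as bs rule: padd.induct) (auto simp: algebra_simps)

definition psc :: "int \<Rightarrow> int list \<Rightarrow> int list" where "psc k as = map ((*) k) as"

lemma peval_psc[simp]: "peval (psc k as) y = of_int k * peval as y"
  by (induction as) (auto simp: psc_def algebra_simps)

fun pmul :: "int list \<Rightarrow> int list \<Rightarrow> int list" where
  "pmul [] bs = []"
| "pmul (a#as) bs = padd (psc a bs) (0 # pmul as bs)"

lemma peval_pmul[simp]: "peval (pmul as bs) y = peval as y * peval bs y"
  by (induction as) (auto simp: algebra_simps)

definition qstep :: "int \<Rightarrow> int \<times> int \<Rightarrow> int \<Rightarrow> int \<Rightarrow> int \<Rightarrow> int \<times> int" where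
  "qstep c lp a b d = (c * (snd lp * d) + (if 0 \<le> fst lp then a * fst lp else b * fst lp), snd lp * d)"

fun lbq :: "int list \<Rightarrow> int \<Rightarrow> int \<Rightarrow> int \<Rightarrow> int \<times> int" where
  "lbq [] a b d = (0, 1)"
| "lbq (c#cs) a b d = qstep c (lbq cs a b d) a b d"

lemma lbq_correct:
  assumes "0 \<le> a" "0 < d" "of_int a / of_int d \<le> y" "y \<le> of_int b / of_int d"
  shows "0 < snd (lbq cs a b d) \<and> of_int (fst (lbq cs a b d)) / of_int (snd (lbq cs a b d)) \<le> peval cs y"
proof (induction cs)
  case Nil then show ?case by simp
next
  case (Cons c cs)
  define l where "l = fst (lbq cs a b d)"
  define p where "p = snd (lbq cs a b d)"
  have p0: "0 < p" using Cons p_def by simp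
  have IH: "of_int l / of_int p \<le> peval cs y" using Cons l_def p_def by simp
  have y0: "0 \<le> y" using assms by (smt (verit) divide_nonneg_pos of_int_0_less_iff of_int_nonneg)
  have dpos: "(0::real) < of_int d" using assms by simp
  have pp: "(0::real) < of_int p" using p0 by simp
  have key: "of_int (if 0 \<le> l then a*l else b*l) / (of_int p * of_int d) \<le> y * peval cs y"
  proof (cases "0 \<le> l")
    case True
    have "of_int (a*l) / (of_int p * of_int d) = (of_int a / of_int d) * (of_int l / (of_int p::real))"
      using pp dpos by (simp add: field_simps)
    also have "\<dots> \<le> y * (of_int l / of_int p)" using True assms(3) pp
      by (intro mult_right_mono) auto
    also have "\<dots> \<le> y * peval cs y" using IH y0 by (intro mult_left_mono) auto
    finally show ?thesis using True by simp
  next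
    case False
    have "of_int (b*l) / (of_int p * of_int d) = (of_int b / of_int d) * (of_int l / (of_int p::real))"
      using pp dpos by (simp add: field_simps)
    also have "\<dots> \<le> y * (of_int l / of_int p)" using False assms(4) pp
      by (intro mult_right_mono_neg) (auto simp: divide_nonpos_pos)
    also have "\<dots> \<le> y * peval cs y" using IH y0 by (intro mult_left_mono) auto
    finally show ?thesis using False by simp
  qed
  have e: "lbq (c#cs) a b d = (c * (p*d) + (if 0 \<le> l then a*l else b*l), p*d)"
    by (simp add: qstep_def l_def p_def)
  have "of_int (c * (p*d) + (if 0 \<le> l then a*l else b*l)) / of_int (p*d)
        = (of_int c::real) + of_int (if 0 \<le> l then a*l else b*l) / (of_int p * of_int d)"
    using pp dpos by (simp add: field_simps)
  then have 2: "of_int (c * (p*d) + (if 0 \<le> l then a*l else b*l)) / of_int (p*d) \<le> peval (c#cs) y"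
    using key by simp
  have 1: "0 < p*d" using p0 assms(2) by simp
  show ?case unfolding e fst_conv snd_conv using 1 2 by blast
qed

fun chk :: "int list \<Rightarrow> int list \<Rightarrow> int \<Rightarrow> bool" where
  "chk cs [] d = False"
| "chk cs [a] d = False"
| "chk cs [a,b] d = (a \<le> b \<and> 0 < fst (lbq cs a b d))"
| "chk cs (a#b#c#rest) d = (a \<le> b \<and> 0 < fst (lbq cs a b d) \<and> chk cs (b#c#rest) d)"

lemma lbq_pos: "0 \<le> a \<Longrightarrow> 0 < d \<Longrightarrow> of_int a / of_int d \<le> y \<Longrightarrow> y \<le> of_int b / of_int d
   \<Longrightarrow> 0 < fst (lbq cs a b d) \<Longrightarrow> 0 < peval cs y"
  using lbq_correct[of a d y b cs]
  by (smt (verit) divide_pos_pos of_int_0_less_iff)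

lemma chk_correct:
  "chk cs bs d \<Longrightarrow> 0 < d \<Longrightarrow> 0 \<le> hd bs \<Longrightarrow> of_int (hd bs) / of_int d \<le> y
   \<Longrightarrow> y \<le> of_int (last bs) / of_int d \<Longrightarrow> 0 < peval cs y"
proof (induction cs bs d rule: chk.induct)
  case (3 cs a b d)
  then show ?case by (intro lbq_pos[of a d y b]) auto
next
  case (4 cs a b c rest d)
  show ?case
  proof (cases "y \<le> of_int b / of_int d")
    case True
    then show ?thesis using 4 by (intro lbq_pos[of a d y b]) auto
  next
    case False
    have "0 \<le> b" using 4 by simp
    then show ?thesis using 4 False by simp
  qed
qed auto

lemma peval_shift: "take k cs = replicate k 0 \<Longrightarrow> peval cs y = y^k * peval (drop k cs) y"
proof (induction k arbitrary: cs)
  case 0 then show ?case by simp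
next
  case (Suc k) then show ?case by (cases cs) auto
qed


fun ppow :: "int list \<Rightarrow> nat \<Rightarrow> int list" where
  "ppow p 0 = [1]"
| "ppow p (Suc n) = pmul p (ppow p n)"

lemma ppow_numeral[simp]: "ppow p (numeral k) = pmul p (ppow p (pred_numeral k))"
  by (simp add: numeral_eq_Suc)

lemma ppow_1[simp]: "ppow p 1 = pmul p [1]"
  using ppow.simps(2)[of p 0] by simp

lemma peval_ppow[simp]: "peval (ppow p n) y = peval p y ^ n"
  by (induction n) auto

definition plin :: "int list list \<Rightarrow> int list" where "plin ps = foldr padd ps []"

lemma peval_plin[simp]: "peval (plin ps) y = (\<Sum>p\<leftarrow>ps. peval p y)"
  by (induction ps) (auto simp: plin_def)

lemma peval_rep_app: "peval (replicate k 0 @ xs) y = y^k * peval xs y"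
  by (induction k) auto

lemma pos_from_chk:
  assumes "cs = replicate k 0 @ psc g q" "0 < g" "chk q bs d" "0 < d" "0 \<le> hd bs"
    "of_int (hd bs) / of_int d \<le> y" "y \<le> of_int (last bs) / of_int d" "0 < y \<or> k = 0"
  shows "0 < peval cs y"
proof -
  have "0 < peval q y" using chk_correct[OF assms(3,4,5,6,7)] .
  moreover have "0 < y^k" using assms(8) by auto
  ultimately show ?thesis using assms(1,2) by (simp add: peval_rep_app)
qed

definition "pS = ([5040,-840,42,-1]::int list)"
definition "pMu = ([0,840,-42,1]::int list)"
definition "pDd = ([0,20160,-1680,56,-1]::int list)"
definition "pCL = ([720,-360,30,-1]::int list)"
definition "pSU = ([362880,-60480,3024,-72,1]::int list)"
definition "pSL = ([0,6,0,-1]::int list)"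
definition "pCU = ([24,0,-12,0,1]::int list)"
definition "pN = ([157,-100]::int list)"
definition "pU = ([625,1000,300,-40,14]::int list)"
definition "pZ = ([125,50,-15,8]::int list)"
definition "pWb = ([625,-250,-75,-40,-26]::int list)"
definition "p1h = ([1,1]::int list)"
definition "p1d = ([1,-1]::int list)"
definition "pCU2 = ([24,-12,1]::int list)"
definition "eU4 = plin [psc 625 (ppow pS 4), psc 1000 (pmul pMu (ppow pS 3)), psc 300 (pmul (ppow pMu 2) (ppow pS 2)), psc (-40) (pmul (ppow pMu 3) pS), psc 14 (ppow pMu 4)]"
definition "eZ = plin [psc 125 (ppow pS 3), psc 50 (pmul pMu (ppow pS 2)), psc (-15) (pmul (ppow pMu 2) pS), psc 8 (ppow pMu 3)]"
definition "eW = plin [[1651817683353600000000], psc (-16387080192000000) pDd, psc (-121927680000) (ppow pDd 2), psc (-1612800) (ppow pDd 3), psc (-26) (ppow pDd 4)]"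
definition "eK2 = plin [psc 1651817683353600000000 (plin [psc 1875 (ppow pS 4), psc (-1) eU4]), psc (-10) (pmul pS (pmul eZ eW))]"
definition "eH35 = plin [psc 3 pS, psc (-5) pMu]"
definition "eU4c = plin [ppow pU 5, psc (-95367431640625) (ppow p1h 8)]"
definition "eZc = plin [ppow pZ 5, psc (-30517578125) (ppow p1h 2)]"
definition "eWc = plin [ppow pWb 5, psc (-95367431640625) (ppow p1d 2)]"
definition "eK1 = plin [psc 24 (ppow pS 3), psc (-128024064000) pCU2]"
definition "eB1in = plin [psc 3 (ppow pSU 2), [-131681894400]]"
definition "eB1 = plin [psc 69360485251091005440000 (pmul pCL (ppow pS 3)), psc (-92177326080000) (ppow eB1in 2)]"
definition "eB1aux = plin [psc 3 (ppow pS 2), [-25401600]]"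
definition "eI = plin [psc 49298 (ppow pCU 2), psc 3768 (pmul pN pCU), psc (-1728) (ppow pN 2)]"
definition "eR2 = plin [psc 30955088024752957144694784 (pmul (ppow pSL 2) (ppow pCU 4)), psc (-32248627200) (ppow eI 3)]"
definition "q_eK2 = ([32425769964198929891328000000000000,-6863307786579877665177600000000000,-13568672114842291792773120000000000,9896763637120896677707776000000000,-3427715889776823202794700800000000,772835248854456067644456960000000,-127365679235649712416620544000000,16324189548073154376420556800000,-1691048579951071432330444800000,145280534980538406041026560000,-10537216036462407163576320000,653301922320780653297664000,-34919232813837124042752000,1617833081244651831705600,-65156078414042619494400,2282172175068853616640,-69396738898799370240,1824259019999480064,-41162859856145664,788729648895552,-12632859657600,165231770704,-1702762880,13031928,-66248,169]::int list)"
lemma val_eK2: "eK2 = replicate 3 0 @ psc 80 q_eK2"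
  by (simp add: pS_def pMu_def pDd_def pCL_def pSU_def pSL_def pCU_def pN_def pU_def pZ_def pWb_def p1h_def p1d_def pCU2_def eU4_def eZ_def eW_def eK2_def eH35_def eU4c_def eZc_def eWc_def eK1_def eB1in_def eB1_def eB1aux_def eI_def eR2_def q_eK2_def psc_def plin_def numeral_eq_Suc)
lemma chk_eK2: "chk q_eK2 [0,158,197,237,256,276,286,296,306,311,316] 128"
  by (simp add: q_eK2_def qstep_def)
lemmas pos_eK2 = pos_from_chk[OF val_eK2 _ chk_eK2, simplified]

definition "q_pS = ([5040,-840,42,-1]::int list)"
lemma val_pS: "pS = replicate 0 0 @ psc 1 q_pS"
  by (simp add: pS_def pMu_def pDd_def pCL_def pSU_def pSL_def pCU_def pN_def pU_def pZ_def pWb_def p1h_def p1d_def pCU2_def eU4_def eZ_def eW_def eK2_def eH35_def eU4c_def eZc_def eWc_def eK1_def eB1in_def eB1_def eB1aux_def eI_def eR2_def q_pS_def psc_def plin_def numeral_eq_Suc)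
lemma chk_pS: "chk q_pS [0,316] 128"
  by (simp add: q_pS_def qstep_def)
lemmas pos_pS = pos_from_chk[OF val_pS _ chk_pS, simplified]

definition "q_eH35 = ([1890,-840,42,-1]::int list)"
lemma val_eH35: "eH35 = replicate 0 0 @ psc 8 q_eH35"
  by (simp add: pS_def pMu_def pDd_def pCL_def pSU_def pSL_def pCU_def pN_def pU_def pZ_def pWb_def p1h_def p1d_def pCU2_def eU4_def eZ_def eW_def eK2_def eH35_def eU4c_def eZc_def eWc_def eK1_def eB1in_def eB1_def eB1aux_def eI_def eR2_def q_eH35_def psc_def plin_def numeral_eq_Suc)
lemma chk_eH35: "chk q_eH35 [0,158,237,276,316] 128"
  by (simp add: q_eH35_def qstep_def)
lemmas pos_eH35 = pos_from_chk[OF val_eH35 _ chk_eH35, simplified]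

definition "q_pDd = ([20160,-1680,56,-1]::int list)"
lemma val_pDd: "pDd = replicate 1 0 @ psc 1 q_pDd"
  by (simp add: pS_def pMu_def pDd_def pCL_def pSU_def pSL_def pCU_def pN_def pU_def pZ_def pWb_def p1h_def p1d_def pCU2_def eU4_def eZ_def eW_def eK2_def eH35_def eU4c_def eZc_def eWc_def eK1_def eB1in_def eB1_def eB1aux_def eI_def eR2_def q_pDd_def psc_def plin_def numeral_eq_Suc)
lemma chk_pDd: "chk q_pDd [0,316] 128"
  by (simp add: q_pDd_def qstep_def)
lemmas pos_pDd = pos_from_chk[OF val_pDd _ chk_pDd, simplified]

definition "q_eU4c = ([5126953125000,29907226562500,71826171875000,90189208984375,61359375000000,20481562500000,2323125000000,334468750000,284900000000,1810000000,-2146400000,3396050000,-591920000,101528000,-7683200,537824]::int list)"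
lemma val_eU4c: "eU4c = replicate 5 0 @ psc 1 q_eU4c"
  by (simp add: pS_def pMu_def pDd_def pCL_def pSU_def pSL_def pCU_def pN_def pU_def pZ_def pWb_def p1h_def p1d_def pCU2_def eU4_def eZ_def eW_def eK2_def eH35_def eU4c_def eZc_def eWc_def eK1_def eB1in_def eB1_def eB1aux_def eI_def eR2_def q_eU4c_def psc_def plin_def numeral_eq_Suc)
lemma chk_eU4c: "chk q_eU4c [0,77] 128"
  by (simp add: q_eU4c_def qstep_def)
lemmas pos_eU4c = pos_from_chk[OF val_eU4c _ chk_eU4c, simplified]

definition "q_eZc = ([6347656250,5585937500,-761718750,203125000,472265625,-119843750,18240625,17225000,-7280000,2176000,-307200,32768]::int list)"
lemma val_eZc: "eZc = replicate 4 0 @ psc 1 q_eZc"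
  by (simp add: pS_def pMu_def pDd_def pCL_def pSU_def pSL_def pCU_def pN_def pU_def pZ_def pWb_def p1h_def p1d_def pCU2_def eU4_def eZ_def eW_def eK2_def eH35_def eU4c_def eZc_def eWc_def eK1_def eB1in_def eB1_def eB1aux_def eI_def eR2_def q_eZc_def psc_def plin_def numeral_eq_Suc)
lemma chk_eZc: "chk q_eZc [0,77] 128"
  by (simp add: q_eZc_def qstep_def)
lemmas pos_eZc = pos_from_chk[OF val_eZc _ chk_eZc, simplified]

definition "q_eWc = ([14282226562500,-11901855468750,-1904296875000,-618896484375,-234863281250,767939453125,261015625000,85464843750,10181250000,-23799375000,-13076400000,-5842200000,-2058420000,-452582000,-91395200,-11881376]::int list)"
lemma val_eWc: "eWc = replicate 5 0 @ psc 1 q_eWc"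
  by (simp add: pS_def pMu_def pDd_def pCL_def pSU_def pSL_def pCU_def pN_def pU_def pZ_def pWb_def p1h_def p1d_def pCU2_def eU4_def eZ_def eW_def eK2_def eH35_def eU4c_def eZc_def eWc_def eK1_def eB1in_def eB1_def eB1aux_def eI_def eR2_def q_eWc_def psc_def plin_def numeral_eq_Suc)
lemma chk_eWc: "chk q_eWc [0,64,96,128] 128"
  by (simp add: q_eWc_def qstep_def)
lemmas pos_eWc = pos_from_chk[OF val_eWc _ chk_eWc, simplified]

definition "q_pWb = ([625,-250,-75,-40,-26]::int list)"
lemma val_pWb: "pWb = replicate 0 0 @ psc 1 q_pWb"
  by (simp add: pS_def pMu_def pDd_def pCL_def pSU_def pSL_def pCU_def pN_def pU_def pZ_def pWb_def p1h_def p1d_def pCU2_def eU4_def eZ_def eW_def eK2_def eH35_def eU4c_def eZc_def eWc_def eK1_def eB1in_def eB1_def eB1aux_def eI_def eR2_def q_pWb_def psc_def plin_def numeral_eq_Suc)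
lemma chk_pWb: "chk q_pWb [0,128] 128"
  by (simp add: q_pWb_def qstep_def)
lemmas pos_pWb = pos_from_chk[OF val_pWb _ chk_pWb, simplified]

definition "q_eK1 = ([8534937600,-1735776000,140978880,-7832160,300888,-7812,126,-1]::int list)"
lemma val_eK1: "eK1 = replicate 2 0 @ psc 24 q_eK1"
  by (simp add: pS_def pMu_def pDd_def pCL_def pSU_def pSL_def pCU_def pN_def pU_def pZ_def pWb_def p1h_def p1d_def pCU2_def eU4_def eZ_def eW_def eK2_def eH35_def eU4c_def eZc_def eWc_def eK1_def eB1in_def eB1_def eB1aux_def eI_def eR2_def q_eK1_def psc_def plin_def numeral_eq_Suc)
lemma chk_eK1: "chk q_eK1 [0,316] 128"
  by (simp add: q_eK1_def qstep_def)
lemmas pos_eK1 = pos_from_chk[OF val_eK1 _ chk_eK1, simplified]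

definition "q_eB1 = ([128445343057575936000,-106018378396729344000,26657505721869926400,-3606153976715673600,309533778577981440,-17900309997158400,697548842532864,-16763481391104,140209864704,5643509760,-239956992,4347648,-43200,288,-1]::int list)"
lemma val_eB1: "eB1 = replicate 2 0 @ psc 829595934720000 q_eB1"
  by (simp add: pS_def pMu_def pDd_def pCL_def pSU_def pSL_def pCU_def pN_def pU_def pZ_def pWb_def p1h_def p1d_def pCU2_def eU4_def eZ_def eW_def eK2_def eH35_def eU4c_def eZc_def eWc_def eK1_def eB1in_def eB1_def eB1aux_def eI_def eR2_def q_eB1_def psc_def plin_def numeral_eq_Suc)
lemma chk_eB1: "chk q_eB1 [0,108,162,189,217] 128"
  by (simp add: q_eB1_def qstep_def)
lemmas pos_eB1 = pos_from_chk[OF val_eB1 _ chk_eB1, simplified]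

definition "q_eB1aux = ([16934400,-8467200,1128960,-80640,3444,-84,1]::int list)"
lemma val_eB1aux: "eB1aux = replicate 0 0 @ psc 3 q_eB1aux"
  by (simp add: pS_def pMu_def pDd_def pCL_def pSU_def pSL_def pCU_def pN_def pU_def pZ_def pWb_def p1h_def p1d_def pCU2_def eU4_def eZ_def eW_def eK2_def eH35_def eU4c_def eZc_def eWc_def eK1_def eB1in_def eB1_def eB1aux_def eI_def eR2_def q_eB1aux_def psc_def plin_def numeral_eq_Suc)
lemma chk_eB1aux: "chk q_eB1aux [0,217] 128"
  by (simp add: q_eB1aux_def qstep_def)
lemmas pos_eB1aux = pos_from_chk[OF val_eB1aux _ chk_eB1aux, simplified]

definition "q_eR2 = ([967346500773529910771712,-7799921041305600000000000,25054256850480451541532672,-34216901485297390080000000,14943678546256673449144320,8922328392822280704000000,-9017307163494950257732608,-1075120696845252576000000,2749384548423253244226816,-27680473540233832320000,-551289048855349842398016,27216585423678808800000,79217334526240516481280,-4163406464897452800000,-8211523279530870448272,333785162755454400000,594713002248042055824,-13907715114810600000,-28514141245642267020,231795251913510000,808827687472897592,0,-10108848486228075]::int list)"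
lemma val_eR2: "eR2 = replicate 2 0 @ psc 382205952 q_eR2"
  by (simp add: pS_def pMu_def pDd_def pCL_def pSU_def pSL_def pCU_def pN_def pU_def pZ_def pWb_def p1h_def p1d_def pCU2_def eU4_def eZ_def eW_def eK2_def eH35_def eU4c_def eZc_def eWc_def eK1_def eB1in_def eB1_def eB1aux_def eI_def eR2_def q_eR2_def psc_def plin_def numeral_eq_Suc)
lemma chk_eR2: "chk q_eR2 [0,8,17,21,26,28,30,32,33,35] 128"
  by (simp add: q_eR2_def qstep_def)
lemmas pos_eR2 = pos_from_chk[OF val_eR2 _ chk_eR2, simplified]

definition "q_pCU = ([24,0,-12,0,1]::int list)"
lemma val_pCU: "pCU = replicate 0 0 @ psc 1 q_pCU"
  by (simp add: pS_def pMu_def pDd_def pCL_def pSU_def pSL_def pCU_def pN_def pU_def pZ_def pWb_def p1h_def p1d_def pCU2_def eU4_def eZ_def eW_def eK2_def eH35_def eU4c_def eZc_def eWc_def eK1_def eB1in_def eB1_def eB1aux_def eI_def eR2_def q_pCU_def psc_def plin_def numeral_eq_Suc)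
lemma chk_pCU: "chk q_pCU [0,35] 128"
  by (simp add: q_pCU_def qstep_def)
lemmas pos_pCU = pos_from_chk[OF val_pCU _ chk_pCU, simplified]



lemma sum4_sin: "(\<Sum>m<4. sin_coeff m * (x::real) ^ m) = x - x^3/6"
  by (simp add: sin_coeff_def lessThan_nat_numeral fact_numeral)

lemma sin_lb3: fixes x :: real assumes "0 \<le> x" "x \<le> 2" shows "x - x^3/6 \<le> sin x"
proof (cases "x = 0")
  case True then show ?thesis by (simp add: power_0_left)
next
  case False
  then have x0: "x > 0" using assms by simp
  from Maclaurin_sin_expansion3[OF _ x0, of 4] obtain t where t: "0 < t" "t < x"
    "sin x = (\<Sum>m<4. sin_coeff m * x ^ m) + sin (t + 1/2 * real 4 * pi) / fact 4 * x ^ 4" by auto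
  have e: "t + 1/2 * real 4 * pi = t + 2*pi" by simp
  have "0 \<le> sin t" using t assms pi_gt3 by (intro sin_ge_zero) auto
  then have "0 \<le> sin (t + 1/2 * real 4 * pi) / fact 4 * x ^ 4" unfolding e sin_periodic sin_periodic_pi using x0 by simp
  then show ?thesis using t(3) sum4_sin by simp
qed

lemma sum6_sin: "(\<Sum>m<6. sin_coeff m * (x::real) ^ m) = x - x^3/6 + x^5/120"
  by (simp add: sin_coeff_def lessThan_nat_numeral fact_numeral)

lemma sin_ub5: fixes x :: real assumes "0 \<le> x" "x \<le> 2" shows "sin x \<le> x - x^3/6 + x^5/120"
proof (cases "x = 0")
  case True then show ?thesis by (simp add: power_0_left)
next
  case False
  then have x0: "x > 0" using assms by simp
  from Maclaurin_sin_expansion3[OF _ x0, of 6] obtain t where t: "0 < t" "t < x"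
    "sin x = (\<Sum>m<6. sin_coeff m * x ^ m) + sin (t + 1/2 * real 6 * pi) / fact 6 * x ^ 6" by auto
  have e: "t + 1/2 * real 6 * pi = (t + pi) + 2*pi" by simp
  have "0 \<le> sin t" using t assms pi_gt3 by (intro sin_ge_zero) auto
  then have "sin (t + 1/2 * real 6 * pi) / fact 6 * x ^ 6 \<le> 0" unfolding e sin_periodic sin_periodic_pi using x0 by simp
  then show ?thesis using t(3) sum6_sin by simp
qed

lemma sum8_sin: "(\<Sum>m<8. sin_coeff m * (x::real) ^ m) = x - x^3/6 + x^5/120 - x^7/5040"
  by (simp add: sin_coeff_def lessThan_nat_numeral fact_numeral)

lemma sin_lb7: fixes x :: real assumes "0 \<le> x" "x \<le> 2" shows "x - x^3/6 + x^5/120 - x^7/5040 \<le> sin x"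
proof (cases "x = 0")
  case True then show ?thesis by (simp add: power_0_left)
next
  case False
  then have x0: "x > 0" using assms by simp
  from Maclaurin_sin_expansion3[OF _ x0, of 8] obtain t where t: "0 < t" "t < x"
    "sin x = (\<Sum>m<8. sin_coeff m * x ^ m) + sin (t + 1/2 * real 8 * pi) / fact 8 * x ^ 8" by auto
  have e: "t + 1/2 * real 8 * pi = (t + 2*pi) + 2*pi" by simp
  have "0 \<le> sin t" using t assms pi_gt3 by (intro sin_ge_zero) auto
  then have "0 \<le> sin (t + 1/2 * real 8 * pi) / fact 8 * x ^ 8" unfolding e sin_periodic sin_periodic_pi using x0 by simp
  then show ?thesis using t(3) sum8_sin by simp
qed

lemma sum10_sin: "(\<Sum>m<10. sin_coeff m * (x::real) ^ m) = x - x^3/6 + x^5/120 - x^7/5040 + x^9/362880"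
  by (simp add: sin_coeff_def lessThan_nat_numeral fact_numeral)

lemma sin_ub9: fixes x :: real assumes "0 \<le> x" "x \<le> 2" shows "sin x \<le> x - x^3/6 + x^5/120 - x^7/5040 + x^9/362880"
proof (cases "x = 0")
  case True then show ?thesis by (simp add: power_0_left)
next
  case False
  then have x0: "x > 0" using assms by simp
  from Maclaurin_sin_expansion3[OF _ x0, of 10] obtain t where t: "0 < t" "t < x"
    "sin x = (\<Sum>m<10. sin_coeff m * x ^ m) + sin (t + 1/2 * real 10 * pi) / fact 10 * x ^ 10" by auto
  have e: "t + 1/2 * real 10 * pi = ((t + pi) + 2*pi) + 2*pi" by simp
  have "0 \<le> sin t" using t assms pi_gt3 by (intro sin_ge_zero) auto
  then have "sin (t + 1/2 * real 10 * pi) / fact 10 * x ^ 10 \<le> 0" unfolding e sin_periodic sin_periodic_pi using x0 by simp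
  then show ?thesis using t(3) sum10_sin by simp
qed

lemma sum4_cos: "(\<Sum>m<4. cos_coeff m * (x::real) ^ m) = 1 - x^2/2"
  by (simp add: cos_coeff_def lessThan_nat_numeral fact_numeral)

lemma cos_lb2: fixes x :: real assumes "0 \<le> x" "x \<le> pi/2" shows "1 - x^2/2 \<le> cos x"
proof (cases "x = 0")
  case True then show ?thesis by (simp add: power_0_left)
next
  case False
  then have x0: "x > 0" using assms by simp
  from Maclaurin_cos_expansion2[OF x0, of 4] obtain t where t: "0 < t" "t < x"
    "cos x = (\<Sum>m<4. cos_coeff m * x ^ m) + cos (t + 1/2 * real 4 * pi) / fact 4 * x ^ 4" by auto
  have e: "t + 1/2 * real 4 * pi = t + 2*pi" by simp
  have "0 \<le> cos t" using t assms by (intro cos_ge_zero) auto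
  then have "0 \<le> cos (t + 1/2 * real 4 * pi) / fact 4 * x ^ 4" unfolding e cos_periodic cos_periodic_pi using x0 by simp
  then show ?thesis using t(3) sum4_cos by simp
qed

lemma sum6_cos: "(\<Sum>m<6. cos_coeff m * (x::real) ^ m) = 1 - x^2/2 + x^4/24"
  by (simp add: cos_coeff_def lessThan_nat_numeral fact_numeral)

lemma cos_ub4: fixes x :: real assumes "0 \<le> x" "x \<le> pi/2" shows "cos x \<le> 1 - x^2/2 + x^4/24"
proof (cases "x = 0")
  case True then show ?thesis by (simp add: power_0_left)
next
  case False
  then have x0: "x > 0" using assms by simp
  from Maclaurin_cos_expansion2[OF x0, of 6] obtain t where t: "0 < t" "t < x"
    "cos x = (\<Sum>m<6. cos_coeff m * x ^ m) + cos (t + 1/2 * real 6 * pi) / fact 6 * x ^ 6" by auto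
  have e: "t + 1/2 * real 6 * pi = (t + pi) + 2*pi" by simp
  have "0 \<le> cos t" using t assms by (intro cos_ge_zero) auto
  then have "cos (t + 1/2 * real 6 * pi) / fact 6 * x ^ 6 \<le> 0" unfolding e cos_periodic cos_periodic_pi using x0 by simp
  then show ?thesis using t(3) sum6_cos by simp
qed

lemma sum8_cos: "(\<Sum>m<8. cos_coeff m * (x::real) ^ m) = 1 - x^2/2 + x^4/24 - x^6/720"
  by (simp add: cos_coeff_def lessThan_nat_numeral fact_numeral)

lemma cos_lb6: fixes x :: real assumes "0 \<le> x" "x \<le> pi/2" shows "1 - x^2/2 + x^4/24 - x^6/720 \<le> cos x"
proof (cases "x = 0")
  case True then show ?thesis by (simp add: power_0_left)
next
  case False
  then have x0: "x > 0" using assms by simp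
  from Maclaurin_cos_expansion2[OF x0, of 8] obtain t where t: "0 < t" "t < x"
    "cos x = (\<Sum>m<8. cos_coeff m * x ^ m) + cos (t + 1/2 * real 8 * pi) / fact 8 * x ^ 8" by auto
  have e: "t + 1/2 * real 8 * pi = (t + 2*pi) + 2*pi" by simp
  have "0 \<le> cos t" using t assms by (intro cos_ge_zero) auto
  then have "0 \<le> cos (t + 1/2 * real 8 * pi) / fact 8 * x ^ 8" unfolding e cos_periodic cos_periodic_pi using x0 by simp
  then show ?thesis using t(3) sum8_cos by simp
qed

lemma sum10_cos: "(\<Sum>m<10. cos_coeff m * (x::real) ^ m) = 1 - x^2/2 + x^4/24 - x^6/720 + x^8/40320"
  by (simp add: cos_coeff_def lessThan_nat_numeral fact_numeral)

lemma cos_ub8: fixes x :: real assumes "0 \<le> x" "x \<le> pi/2" shows "cos x \<le> 1 - x^2/2 + x^4/24 - x^6/720 + x^8/40320"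
proof (cases "x = 0")
  case True then show ?thesis by (simp add: power_0_left)
next
  case False
  then have x0: "x > 0" using assms by simp
  from Maclaurin_cos_expansion2[OF x0, of 10] obtain t where t: "0 < t" "t < x"
    "cos x = (\<Sum>m<10. cos_coeff m * x ^ m) + cos (t + 1/2 * real 10 * pi) / fact 10 * x ^ 10" by auto
  have e: "t + 1/2 * real 10 * pi = ((t + pi) + 2*pi) + 2*pi" by simp
  have "0 \<le> cos t" using t assms by (intro cos_ge_zero) auto
  then have "cos (t + 1/2 * real 10 * pi) / fact 10 * x ^ 10 \<le> 0" unfolding e cos_periodic cos_periodic_pi using x0 by simp
  then show ?thesis using t(3) sum10_cos by simp
qed


lemma powr_le_by_pow:
  fixes a u :: real
  assumes "0 < a" "0 \<le> u" "a ^ k \<le> u ^ 5"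
  shows "a powr (real k / 5) \<le> u"
proof -
  have "(a powr (real k / 5)) ^ 5 = a powr (real 5 * (real k / 5))"
    using assms(1) by (subst powr_power) auto
  also have "\<dots> = a ^ k" using assms(1) by (simp add: powr_realpow)
  finally have "(a powr (real k / 5)) ^ Suc 4 \<le> u ^ Suc 4" using assms(3) by simp
  then show ?thesis using assms(2) by (rule power_le_imp_le_base)
qed

definition u4 :: "real \<Rightarrow> real" where "u4 h = (625 + 1000*h + 300*h^2 - 40*h^3 + 14*h^4)/625"
definition z3 :: "real \<Rightarrow> real" where "z3 h = (125 + 50*h - 15*h^2 + 8*h^3)/125"
definition wb :: "real \<Rightarrow> real" where "wb d = (625 - 250*d - 75*d^2 - 40*d^3 - 26*d^4)/625"

lemma peval_pU: "peval pU h = 625 * u4 h"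
  by (simp add: pU_def u4_def algebra_simps power2_eq_square power3_eq_cube power4_eq_xxxx)
lemma peval_pZ: "peval pZ h = 125 * z3 h"
  by (simp add: pZ_def z3_def algebra_simps power2_eq_square power3_eq_cube)
lemma peval_pWb: "peval pWb h = 625 * wb h"
  by (simp add: pWb_def wb_def algebra_simps power2_eq_square power3_eq_cube power4_eq_xxxx)

lemma peval_p1h: "peval p1h h = 1 + h" by (simp add: p1h_def)
lemma peval_p1d: "peval p1d h = 1 - h" by (simp add: p1d_def)

lemma PU4:
  fixes h :: real assumes "0 \<le> h" "h \<le> 77/128"
  shows "(1+h) powr (8/5) \<le> u4 h"
proof -
  have u0: "0 \<le> u4 h"
  proof -
    have "h^3 \<le> 1" using assms by (simp add: power_le_one)
    moreover have "0 \<le> 1000*h + 300*h^2 + 14*h^4" using assms by simp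
    ultimately show ?thesis unfolding u4_def by simp
  qed
  have "(1+h)^8 \<le> (u4 h)^5"
  proof (cases "h = 0")
    case True then show ?thesis by (simp add: u4_def)
  next
    case False
    then have "0 < peval eU4c h" using assms by (intro pos_eU4c) auto
    moreover have "peval eU4c h = (625 * u4 h)^5 - 625^5 * (1+h)^8"
      by (simp add: eU4c_def peval_p1h peval_pU del: ppow_numeral ppow_1)
    ultimately have "625^5 * (1+h)^8 < 625^5 * u4 h ^ 5" by (simp add: power_mult_distrib)
    then show ?thesis by simp
  qed
  then show ?thesis using powr_le_by_pow[of "1+h" "u4 h" 8] assms u0 by simp
qed

lemma PZ:
  fixes h :: real assumes "0 \<le> h" "h \<le> 77/128"
  shows "(1+h) powr (2/5) \<le> z3 h"
proof -
  have u0: "0 \<le> z3 h"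
  proof -
    have "h^2 \<le> 1" using assms by (simp add: power_le_one)
    moreover have "0 \<le> 50*h + 8*h^3" using assms by simp
    ultimately show ?thesis unfolding z3_def by simp
  qed
  have "(1+h)^2 \<le> (z3 h)^5"
  proof (cases "h = 0")
    case True then show ?thesis by (simp add: z3_def)
  next
    case False
    then have "0 < peval eZc h" using assms by (intro pos_eZc) auto
    moreover have "peval eZc h = (125 * z3 h)^5 - 125^5 * (1+h)^2"
      by (simp add: eZc_def peval_p1h peval_pZ del: ppow_numeral ppow_1)
    ultimately have "125^5 * (1+h)^2 < 125^5 * z3 h ^ 5" by (simp add: power_mult_distrib)
    then show ?thesis by simp
  qed
  then show ?thesis using powr_le_by_pow[of "1+h" "z3 h" 2] assms u0 by simp
qed

lemma PW:
  fixes d :: real assumes "0 \<le> d" "d \<le> 1"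
  shows "(1-d) powr (2/5) \<le> wb d" "0 \<le> wb d"
proof -
  have "0 < peval pWb d" using assms by (intro pos_pWb) auto
  then show u0: "0 \<le> wb d" by (simp add: peval_pWb)
  show "(1-d) powr (2/5) \<le> wb d"
  proof (cases "d = 1")
    case True then show ?thesis using u0 by simp
  next
    case False
    have "(1-d)^2 \<le> (wb d)^5"
    proof (cases "d = 0")
      case True then show ?thesis by (simp add: wb_def)
    next
      case False
      then have "0 < peval eWc d" using assms by (intro pos_eWc) auto
      moreover have "peval eWc d = (625 * wb d)^5 - 625^5 * (1-d)^2"
        by (simp add: eWc_def peval_p1d peval_pWb del: ppow_numeral ppow_1)
      ultimately have "625^5 * (1-d)^2 < 625^5 * wb d ^ 5" by (simp add: power_mult_distrib)
      then show ?thesis by simp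
    qed
    then show ?thesis using powr_le_by_pow[of "1-d" "wb d" 2] assms u0 False by simp
  qed
qed


definition G :: "real \<Rightarrow> real \<Rightarrow> real" where
  "G p x = (1/3) * (sin x / x) powr (4 * p) + (2/3) * (tan x / x) powr p"

lemma pi_ub: "pi \<le> 3.1415926535899" using pi_approx by simp

lemma x_sq_bound: fixes x :: real assumes "0 < x" "x < pi/2" shows "x^2 \<le> 79/32"
proof -
  have a: "x \<le> 1.5708" using assms pi_ub by simp
  have "x * x \<le> 1.5708 * 1.5708" using a assms by (intro mult_mono) auto
  thus ?thesis by (simp add: power2_eq_square)
qed

lemma K2:
  fixes x :: real assumes x0: "0 < x" and x1: "x < pi/2"
  shows "G (-2/5) x < 1"
proof -
  have x2: "x \<le> 2" using x1 pi_ub by simp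
  define y where "y = x^2"
  have y0: "0 < y" using x0 by (simp add: y_def)
  have y1: "y \<le> 79/32" using x_sq_bound[OF x0 x1] by (simp add: y_def)
  define Sv where "Sv = peval pS y"
  define Mv where "Mv = peval pMu y"
  define Dv where "Dv = peval pDd y"
  have Sv_eq: "x * Sv / 5040 = x - x^3/6 + x^5/120 - x^7/5040"
    by (simp add: Sv_def pS_def y_def field_simps) (simp add: algebra_simps eval_nat_numeral)
  have Mv_eq: "Mv = 5040 - Sv" by (simp add: Mv_def Sv_def pMu_def pS_def algebra_simps)
  have Sp: "0 < Sv" unfolding Sv_def using y0 y1 by (intro pos_pS) auto
  have s0: "0 < sin x" using x0 x1 by (intro sin_gt_zero2)
  have c0: "0 < cos x" using x0 x1 by (intro cos_gt_zero)
  have sL: "x * Sv / 5040 \<le> sin x" using sin_lb7[of x] x0 x2 Sv_eq by simp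
  have sx: "sin x \<le> x" using sin_x_le_x x0 by simp
  have SvM: "Sv \<le> 5040"
  proof -
    have "x * Sv \<le> x * 5040" using sL sx by simp
    then show ?thesis using x0 by simp
  qed
  define H where "H = Mv / Sv"
  have H0: "0 \<le> H" using Mv_eq SvM Sp by (simp add: H_def)
  have H1: "H \<le> 77/128"
  proof -
    have "0 < peval eH35 y" using y0 y1 by (intro pos_eH35) auto
    then have "5 * Mv < 3 * Sv" by (simp add: eH35_def Sv_def Mv_def)
    then have "Mv / Sv < 3/5" using Sp by (simp add: field_simps)
    then show ?thesis by (simp add: H_def)
  qed
  have xsp: "0 < x * Sv / 5040" using x0 Sp by simp
  have A_le: "x / sin x \<le> 1 + H"
  proof -
    have "x / sin x \<le> x / (x * Sv / 5040)" using sL xsp x0 by (intro divide_left_mono) auto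
    also have "\<dots> = 1 + H" using x0 Sp Mv_eq by (simp add: H_def field_simps)
    finally show ?thesis .
  qed
  have A_pos: "0 < x / sin x" using x0 s0 by simp
  have T1: "(sin x / x) powr (4 * (-2/5)) = (x / sin x) powr (8/5)"
  proof -
    have "(sin x / x) powr (4 * (-2/5)) = inverse ((sin x / x) powr (8/5))"
      by (simp add: powr_minus[symmetric])
    also have "\<dots> = (inverse (sin x / x)) powr (8/5)" by (rule inverse_powr[symmetric])
    finally show ?thesis by simp
  qed
  have T2: "(tan x / x) powr (-2/5) = (x / sin x) powr (2/5) * cos x powr (2/5)"
  proof -
    have "(tan x / x) powr (-2/5) = inverse ((tan x / x) powr (2/5))"
      by (simp add: powr_minus[symmetric])
    also have "\<dots> = (inverse (tan x / x)) powr (2/5)" by (rule inverse_powr[symmetric])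
    also have "inverse (tan x / x) = (x / sin x) * cos x" using s0 c0 by (simp add: tan_def field_simps)
    finally show ?thesis by (simp add: powr_mult[symmetric])
  qed
  have B1: "(x / sin x) powr (8/5) \<le> u4 H"
  proof -
    have "(x / sin x) powr (8/5) \<le> (1 + H) powr (8/5)" using A_le A_pos by (intro powr_mono2) auto
    also have "\<dots> \<le> u4 H" using PU4 H0 H1 by simp
    finally show ?thesis .
  qed
  have B2: "(x / sin x) powr (2/5) \<le> z3 H"
  proof -
    have "(x / sin x) powr (2/5) \<le> (1 + H) powr (2/5)" using A_le A_pos by (intro powr_mono2) auto
    also have "\<dots> \<le> z3 H" using PZ H0 H1 by simp
    finally show ?thesis .
  qed
  define D where "D = Dv / 40320"
  have cU: "cos x \<le> 1 - D"
  proof -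
    have "1 - D = 1 - x^2/2 + x^4/24 - x^6/720 + x^8/40320"
      by (simp add: D_def Dv_def pDd_def y_def field_simps)
    then show ?thesis using cos_ub8[of x] x0 x1 by simp
  qed
  have D0: "0 \<le> D"
  proof -
    have "0 < peval pDd y" using y0 y1 by (intro pos_pDd) auto
    then show ?thesis by (simp add: D_def Dv_def)
  qed
  have D1: "D \<le> 1" using cU c0 by simp
  have B3: "cos x powr (2/5) \<le> wb D"
  proof -
    have "cos x powr (2/5) \<le> (1 - D) powr (2/5)" using cU c0 by (intro powr_mono2) auto
    also have "\<dots> \<le> wb D" using PW(1)[OF D0 D1] .
    finally show ?thesis .
  qed
  have W0: "0 \<le> wb D" using PW(2)[OF D0 D1] .
  have Gle: "G (-2/5) x \<le> (1/3) * u4 H + (2/3) * (z3 H * wb D)"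
  proof -
    have "(x / sin x) powr (2/5) * cos x powr (2/5) \<le> z3 H * wb D"
      using B2 B3 W0 order_trans[OF powr_ge_zero B2] by (intro mult_mono) auto
    then show ?thesis unfolding G_def T1 T2 using B1 by simp
  qed
  define E where "E = peval eU4 y"
  define Zv where "Zv = peval eZ y"
  define Wv where "Wv = peval eW y"
  have Ev: "E = 625*Sv^4 + 1000*(Mv*Sv^3) + 300*(Mv^2*Sv^2) - 40*(Mv^3*Sv) + 14*Mv^4"
    by (simp add: E_def eU4_def Sv_def Mv_def del: ppow_numeral ppow_1)
  have Zvv: "Zv = 125*Sv^3 + 50*(Mv*Sv^2) - 15*(Mv^2*Sv) + 8*Mv^3"
    by (simp add: Zv_def eZ_def Sv_def Mv_def del: ppow_numeral ppow_1)
  have Wvv: "Wv = 1651817683353600000000 - 16387080192000000*Dv - 121927680000*Dv^2 - 1612800*Dv^3 - 26*Dv^4"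
    by (simp add: Wv_def eW_def Dv_def del: ppow_numeral ppow_1)
  have u4H: "u4 H = E / (625 * Sv^4)"
    using Sp unfolding u4_def H_def Ev by (simp add: field_simps power2_eq_square power3_eq_cube power4_eq_xxxx)
  have z3H: "z3 H = Zv / (125 * Sv^3)"
    using Sp unfolding z3_def H_def Zvv by (simp add: field_simps power2_eq_square power3_eq_cube)
  have wbD: "wb D = Wv / 1651817683353600000000"
    unfolding wb_def D_def Wvv by (simp add: field_simps power2_eq_square power3_eq_cube power4_eq_xxxx)
  have K: "0 < peval eK2 y" using y0 y1 by (intro pos_eK2) auto
  have Kv: "peval eK2 y = 1651817683353600000000 * (1875*Sv^4 - E) - 10 * (Sv * (Zv * Wv))"
    by (simp add: eK2_def E_def Zv_def Wv_def Sv_def del: ppow_numeral ppow_1)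
  have "(1/3) * u4 H + (2/3) * (z3 H * wb D)
        = (1651817683353600000000 * E + 10 * (Sv * (Zv * Wv))) / (1875 * 1651817683353600000000 * Sv^4)"
    using Sp unfolding u4H z3H wbD by (simp add: field_simps power2_eq_square power3_eq_cube power4_eq_xxxx)
  also have "\<dots> < 1"
    using K Kv Sp by (simp add: divide_less_eq)
  finally show ?thesis using Gle by simp
qed


lemma K1:
  fixes x :: real assumes x0: "0 < x" and x1: "x < pi/2"
  shows "x^3 * cos x < sin x ^ 3"
proof -
  have x2: "x \<le> 2" using x1 pi_ub by simp
  define y where "y = x^2"
  have y0: "0 < y" using x0 by (simp add: y_def)
  have y1: "y \<le> 79/32" using x_sq_bound[OF x0 x1] by (simp add: y_def)
  define Sv where "Sv = peval pS y"
  define Cv where "Cv = peval pCU2 y"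
  have Sv_eq: "x * Sv / 5040 = x - x^3/6 + x^5/120 - x^7/5040"
    by (simp add: Sv_def pS_def y_def field_simps) (simp add: algebra_simps eval_nat_numeral)
  have Cv_eq: "Cv / 24 = 1 - x^2/2 + x^4/24"
    by (simp add: Cv_def pCU2_def y_def field_simps)
  have Sp: "0 < Sv" unfolding Sv_def using y0 y1 by (intro pos_pS) auto
  have sL: "x * Sv / 5040 \<le> sin x" using sin_lb7[of x] x0 x2 Sv_eq by simp
  have cU: "cos x \<le> Cv / 24" using cos_ub4[of x] x0 x1 Cv_eq by simp
  have K: "0 < peval eK1 y" using y0 y1 by (intro pos_eK1) auto
  then have K': "5040^3 * Cv < 24 * Sv^3" by (simp add: eK1_def Sv_def Cv_def del: ppow_numeral ppow_1)
  have "x^3 * cos x \<le> x^3 * (Cv / 24)" using cU x0 by (intro mult_left_mono) auto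
  also have "\<dots> < (x * Sv / 5040)^3"
  proof -
    have "x^3 * (Cv/24) = x^3 * (5040^3 * Cv) / (24 * 5040^3)" by simp
    also have "\<dots> < x^3 * (24 * Sv^3) / (24 * 5040^3)" using K' x0 by (intro divide_strict_right_mono mult_strict_left_mono) auto
    also have "\<dots> = (x * Sv / 5040)^3" by (simp add: power_mult_distrib power_divide)
    finally show ?thesis .
  qed
  also have "\<dots> \<le> sin x ^ 3" using sL x0 Sp by (intro power_mono) auto
  finally show ?thesis .
qed

lemma region1:
  fixes x :: real assumes x0: "0 < x" and x1: "x \<le> 13/10"
  shows "1 < G (-1/2) x"
proof -
  have pi_lb: "3.14 \<le> pi" using pi_approx by simp
  have xp: "x < pi/2" using x1 pi_lb by simp
  have x2: "x \<le> 2" using x1 by simp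
  define y where "y = x^2"
  have y0: "0 < y" using x0 by (simp add: y_def)
  have y1: "y \<le> 217/128"
  proof -
    have "x * x \<le> 13/10 * (13/10)" using x1 x0 by (intro mult_mono) auto
    then show ?thesis by (simp add: y_def power2_eq_square)
  qed
  define Sv where "Sv = peval pS y"
  define Uv where "Uv = peval pSU y"
  define Lv where "Lv = peval pCL y"
  have Sv_eq: "x * Sv / 5040 = x - x^3/6 + x^5/120 - x^7/5040"
    by (simp add: Sv_def pS_def y_def field_simps) (simp add: algebra_simps eval_nat_numeral)
  have Uv_eq: "x * Uv / 362880 = x - x^3/6 + x^5/120 - x^7/5040 + x^9/362880"
    by (simp add: Uv_def pSU_def y_def field_simps) (simp add: algebra_simps eval_nat_numeral)
  have Lv_eq: "Lv / 720 = 1 - x^2/2 + x^4/24 - x^6/720"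
    by (simp add: Lv_def pCL_def y_def field_simps)
  have Sp: "0 < Sv" unfolding Sv_def using y0 y1 by (intro pos_pS) auto
  have s0: "0 < sin x" using x0 xp by (intro sin_gt_zero2)
  have c0: "0 < cos x" using x0 xp by (intro cos_gt_zero)
  have sL: "x * Sv / 5040 \<le> sin x" using sin_lb7[of x] x0 x2 Sv_eq by simp
  have sU: "sin x \<le> x * Uv / 362880" using sin_ub9[of x] x0 x2 Uv_eq by simp
  have cL: "Lv / 720 \<le> cos x" using cos_lb6[of x] x0 xp Lv_eq by simp
  have K: "0 < peval eB1 y" using y0 y1 by (intro pos_eB1) auto
  then have K': "720 * 5040^3 * (3 * Uv^2 - 362880^2)^2 < 4 * 362880^4 * (Lv * Sv^3)"
    by (simp add: eB1_def eB1in_def Sv_def Uv_def Lv_def del: ppow_numeral ppow_1)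
  have Lp: "0 < Lv"
  proof (rule ccontr)
    assume "\<not> 0 < Lv"
    then have "Lv * Sv^3 \<le> 0" using Sp by (simp add: mult_nonpos_nonneg)
    then have "4 * 362880^4 * (Lv * Sv^3) \<le> 0" by (simp add: mult_nonneg_nonpos)
    moreover have "0 \<le> 720 * 5040^3 * (3 * Uv^2 - 362880^2)^2" by simp
    ultimately show False using K' by linarith
  qed
  define B where "B = x * cos x / sin x"
  have B0: "0 < B" using x0 c0 s0 by (simp add: B_def)
  have T1: "(sin x / x) powr (4 * (-1/2)) = (x / sin x)^2"
  proof -
    have "(sin x / x) powr (4 * (-1/2)) = inverse ((sin x / x) powr 2)"
      by (simp add: powr_minus[symmetric])
    also have "\<dots> = inverse ((sin x / x)^2)" using s0 x0 by simp
    finally show ?thesis by (simp add: power_divide)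
  qed
  have T2: "(tan x / x) powr (-1/2) = sqrt B"
  proof -
    have "(tan x / x) powr (-1/2) = inverse ((tan x / x) powr (1/2))"
      by (simp add: powr_minus[symmetric])
    also have "\<dots> = (inverse (tan x / x)) powr (1/2)" by (rule inverse_powr[symmetric])
    also have "inverse (tan x / x) = B" using s0 c0 by (simp add: B_def tan_def field_simps)
    finally show ?thesis using B0 by (simp add: powr_half_sqrt)
  qed
  have Gform: "G (-1/2) x = (1/3) * (x / sin x)^2 + (2/3) * sqrt B"
    unfolding G_def using T1 T2 by simp
  show ?thesis
  proof (cases "3 * sin x ^ 2 - x^2 \<le> 0")
    case True
    then have "(x / sin x)^2 \<ge> 3" using s0 by (simp add: power_divide field_simps)
    moreover have "0 < sqrt B" using B0 by simp
    ultimately show ?thesis unfolding Gform by linarith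
  next
    case False
    define R where "R = (3 * sin x ^ 2 - x^2) / (2 * sin x ^ 2)"
    have R0: "0 < R" using False s0 by (simp add: R_def)
    have key: "(3 * sin x ^ 2 - x^2)^2 < 4 * x * cos x * sin x ^ 3"
    proof -
      have "(3 * sin x ^ 2 - x^2)^2 \<le> (3 * (x * Uv / 362880)^2 - x^2)^2"
        using False sU s0 by (intro power_mono) (auto intro!: power_mono)
      also have "\<dots> = x^4 * ((3 * Uv^2 - 362880^2) / 362880^2)^2"
        by (simp add: field_simps power2_eq_square power4_eq_xxxx)
      also have "\<dots> < x^4 * (4 * (Lv / 720) * (Sv / 5040)^3)"
      proof -
        have "((3 * Uv^2 - 362880^2) / 362880^2)^2 < 4 * (Lv / 720) * (Sv / 5040)^3"
          using K' by (simp add: power_divide field_simps)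
        then show ?thesis using x0 by simp
      qed
      also have "\<dots> = 4 * x * (Lv / 720) * (x * Sv / 5040)^3"
        by (simp add: field_simps power4_eq_xxxx power3_eq_cube)
      also have "\<dots> \<le> 4 * x * cos x * sin x ^ 3"
        using cL sL x0 Lp Sp by (intro mult_mono mult_left_mono power_mono) auto
      finally show ?thesis .
    qed
    have "R^2 < B"
    proof -
      have "R^2 = (3 * sin x ^ 2 - x^2)^2 / (4 * sin x ^ 4)"
        by (simp add: R_def power_divide field_simps power4_eq_xxxx power2_eq_square)
      also have "\<dots> < (4 * x * cos x * sin x ^ 3) / (4 * sin x ^ 4)"
        using key s0 by (intro divide_strict_right_mono) auto
      also have "\<dots> = B" using s0 by (simp add: B_def field_simps power4_eq_xxxx power3_eq_cube)
      finally show ?thesis .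
    qed
    then have "R < sqrt B" using R0 by (simp add: real_less_rsqrt)
    moreover have "1 - (1/3) * (x / sin x)^2 = (2/3) * R"
      using s0 by (simp add: R_def field_simps power_divide)
    ultimately show ?thesis unfolding Gform by simp
  qed
qed

lemma powr_conv:
  fixes a t e :: real assumes "0 < a" "0 \<le> t" "t \<le> 1"
  shows "a powr (t * e) \<le> (1 - t) + t * a powr e"
proof -
  have "exp ((1 - t) * 0 + t * (e * ln a)) \<le> (1 - t) * exp 0 + t * exp (e * ln a)"
    using convex_onD[OF exp_convex, of t 0 "e * ln a"] assms by simp
  then show ?thesis using assms by (simp add: powr_def mult.assoc)
qed

lemma Gconv:
  fixes x t p :: real assumes x0: "0 < x" and x1: "x < pi/2" and t: "0 \<le> t" "t \<le> 1"
  shows "G (t * p) x \<le> (1 - t) + t * G p x"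
proof -
  have s0: "0 < sin x" using x0 x1 by (intro sin_gt_zero2)
  have c0: "0 < cos x" using x0 x1 by (intro cos_gt_zero)
  have a1: "0 < sin x / x" using s0 x0 by simp
  have a2: "0 < tan x / x" using s0 c0 x0 by (simp add: tan_def)
  have "(sin x / x) powr (4 * (t * p)) \<le> (1 - t) + t * (sin x / x) powr (4 * p)"
    using powr_conv[OF a1 t, of "4*p"] by (simp add: ac_simps)
  moreover have "(tan x / x) powr (t * p) \<le> (1 - t) + t * (tan x / x) powr p"
    using powr_conv[OF a2 t] by simp
  ultimately show ?thesis unfolding G_def by (simp add: algebra_simps)
qed

lemma Gpos:
  fixes x p :: real assumes x0: "0 < x" and x1: "x < pi/2" and p: "0 < p"
  shows "1 < G p x"
proof -
  have s0: "0 < sin x" using x0 x1 by (intro sin_gt_zero2)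
  have c0: "0 < cos x" using x0 x1 by (intro cos_gt_zero)
  define u where "u = 4 * p * ln (sin x / x)"
  define v where "v = p * ln (tan x / x)"
  have e1: "(sin x / x) powr (4 * p) = exp u" using s0 x0 by (simp add: powr_def u_def ac_simps)
  have e2: "(tan x / x) powr p = exp v" using s0 c0 x0 by (simp add: powr_def v_def tan_def ac_simps)
  have conv: "exp ((1 - 2/3) * u + (2/3) * v) \<le> (1 - 2/3) * exp u + (2/3) * exp v"
    using convex_onD[OF exp_convex, of "2/3" u v] by simp
  have "(1 - 2/3) * u + (2/3) * v = (2*p/3) * ln (sin x ^ 3 / (x^3 * cos x))"
  proof -
    have "ln (sin x ^ 3 / (x^3 * cos x)) = 2 * ln (sin x / x) + ln (tan x / x)"
      using s0 c0 x0 by (simp add: tan_def ln_div ln_mult ln_realpow)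
    then show ?thesis by (simp add: u_def v_def algebra_simps)
  qed
  moreover have "0 < ln (sin x ^ 3 / (x^3 * cos x))"
    using K1[OF x0 x1] x0 c0 by (simp add: ln_gt_zero)
  moreover have "0 < (2*p/3) * ln (sin x ^ 3 / (x^3 * cos x))"
    using calculation(2) p by (intro mult_pos_pos) auto
  ultimately have "0 < (1 - 2/3) * u + (2/3) * v" by linarith
  then have "1 < exp ((1 - 2/3) * u + (2/3) * v)" by simp
  then have "1 < (1 - 2/3) * exp u + (2/3) * exp v" using conv by linarith
  then show ?thesis unfolding G_def e1 e2 by simp
qed


definition q0 :: real where "q0 = ln 3 / (4 * (ln pi - ln 2))"

lemma Lpos: "0 < ln pi - ln 2"
proof -
  have "ln 2 < ln pi" using pi_gt3 by simp
  then show ?thesis by simp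
qed

lemma q0_bounds: "1/2 \<le> q0" "q0 \<le> 5/8"
proof -
  have pi_lb: "3.14 \<le> pi" using pi_approx by simp
  define L where "L = ln pi - ln 2"
  have L0: "0 < L" using Lpos by (simp add: L_def)
  have Ldiv: "L = ln (pi/2)" using pi_gt3 by (simp add: L_def ln_div)
  have "(pi/2)^2 \<le> 3"
  proof -
    have "pi * pi \<le> 3.1415926535899 * 3.1415926535899" using pi_ub pi_gt3 by (intro mult_mono) auto
    then show ?thesis by (simp add: power2_eq_square)
  qed
  then have "ln ((pi/2)^2) \<le> ln 3" using pi_gt3 by (subst ln_le_cancel_iff) auto
  then have "2 * L \<le> ln 3" by (simp add: Ldiv ln_realpow)
  then show "1/2 \<le> q0" using L0 by (simp add: q0_def L_def[symmetric] field_simps)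
  have a: "(1.57::real)^5 \<le> (pi/2)^5" using pi_lb by (intro power_mono) auto
  have b: "(9::real) \<le> 1.57^5" by (simp add: eval_nat_numeral)
  have "9 \<le> (pi/2)^5" using a b by linarith
  then have "ln ((3::real)^2) \<le> ln ((pi/2)^5)" using pi_gt3 by (subst ln_le_cancel_iff) auto
  then have "real 2 * ln 3 \<le> real 5 * ln (pi/2)" by (simp only: ln_realpow)
  then have "2 * ln 3 \<le> 5 * L" by (simp add: Ldiv)
  then show "q0 \<le> 5/8" using L0 by (simp add: q0_def L_def[symmetric] field_simps)
qed

lemma region2:
  fixes x :: real assumes x0: "13/10 \<le> x" and x1: "x < pi/2"
  shows "1 < G (-q0) x"
proof -
  have pi_lb: "3.14 \<le> pi" using pi_approx by simp
  define y where "y = pi/2 - x"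
  have y0: "0 < y" using x1 by (simp add: y_def)
  have y1: "y \<le> 35/128" using x0 pi_ub by (simp add: y_def)
  have y2: "y \<le> pi/2" using y1 pi_lb by simp
  have xpos: "0 < x" using x0 by simp
  have sx: "sin x = cos y" by (simp add: y_def cos_sin_eq)
  have cx: "cos x = sin y" by (simp add: y_def sin_cos_eq)
  have s0: "0 < sin x" using xpos x1 by (intro sin_gt_zero2)
  have c0: "0 < cos x" using xpos x1 by (intro cos_gt_zero)
  define SLv where "SLv = peval pSL y"
  define CUv where "CUv = peval pCU y"
  define Nv where "Nv = peval pN y"
  define sl where "sl = SLv / 6"
  define cu where "cu = CUv / 24"
  define n where "n = Nv / 157"
  have sl_eq: "sl = y - y^3/6" by (simp add: sl_def SLv_def pSL_def field_simps) (simp add: algebra_simps eval_nat_numeral)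
  have cu_eq: "cu = 1 - y^2/2 + y^4/24" by (simp add: cu_def CUv_def pCU_def field_simps) (simp add: algebra_simps eval_nat_numeral)
  have n_eq: "n = 1 - 100 * y / 157" by (simp add: n_def Nv_def pN_def field_simps)
  have sinL: "sl \<le> sin y" using sin_lb3[of y] y0 y1 sl_eq by simp
  have cosU: "cos y \<le> cu" using cos_ub4[of y] y0 y2 cu_eq by simp
  have cosL: "1 - y^2/2 \<le> cos y" using cos_lb2[of y] y0 y2 by simp
  have cy0: "0 < cos y" using s0 sx by simp
  have sy0: "0 < sin y" using c0 cx by simp
  have cu0: "0 < cu" using cosU cy0 by simp
  have sl0: "0 \<le> sl"
  proof -
    have "y * y \<le> 1" using y0 y1 by (intro mult_le_one) auto
    then have "y * (y * y) \<le> y * 1" using y0 by (intro mult_left_mono) auto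
    then have "y^3 \<le> 6 * y" using y0 by (simp add: power3_eq_cube)
    then show ?thesis using sl_eq by simp
  qed
  have n0: "4/5 \<le> n" using n_eq y1 by simp
  have cu1: "cu \<le> 1"
  proof -
    have "y^4 \<le> 12 * y^2"
    proof -
      have "y * y \<le> 1" using y0 y1 by (intro mult_le_one) auto
      then have "y^2 \<le> 12" by (simp add: power2_eq_square)
      then have "y^2 * y^2 \<le> 12 * y^2" by (intro mult_right_mono) auto
      then show ?thesis by (simp add: power4_eq_xxxx power2_eq_square mult.assoc)
    qed
    then show ?thesis using cu_eq by simp
  qed
  define L where "L = ln pi - ln 2"
  have L0: "0 < L" using Lpos by (simp add: L_def)
  define r where "r = 4 * q0"
  have r2: "2 \<le> r" "r \<le> 5/2" using q0_bounds by (auto simp: r_def)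
  have rL: "r * ln (pi/2) = ln 3"
    using L0 pi_gt3 by (simp add: r_def q0_def ln_div L_def[symmetric])
  have pi2r: "(pi/2) powr r = 3"
  proof -
    have "(pi/2) powr r = exp (r * ln (pi/2))" using pi_gt3 by (simp add: powr_def)
    also have "\<dots> = 3" by (simp add: rL)
    finally show ?thesis .
  qed
  define z where "z = 2 * x / (pi * sin x)"
  have z0: "0 < z" using xpos s0 pi_gt3 by (simp add: z_def)
  have z1: "z \<le> 1"
  proof -
    have "pi * y \<le> 4 * 1" using y1 y0 pi_less_4 by (intro mult_mono) auto
    then have "pi * y * y \<le> 4 * y" using y0 by (intro mult_right_mono) auto
    moreover have "pi * (1 - y^2/2) - 2 * x = 2 * y - pi * y * y / 2"
      by (simp add: y_def field_simps power2_eq_square)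
    ultimately have "2 * x \<le> pi * (1 - y^2/2)" by linarith
    also have "\<dots> \<le> pi * sin x" using cosL sx pi_gt3 by (intro mult_left_mono) auto
    finally show ?thesis using s0 pi_gt3 by (simp add: z_def divide_le_eq)
  qed
  define zL where "zL = n / cu"
  have zLz: "zL \<le> z"
  proof -
    have "n \<le> 1 - 2 * y / pi"
    proof -
      have "2 * y / pi \<le> 2 * y / 3.14" using y0 pi_lb by (intro divide_left_mono) auto
      then show ?thesis using n_eq by simp
    qed
    also have "1 - 2 * y / pi = 2 * x / pi" using pi_gt3 by (simp add: y_def field_simps)
    finally have a: "n \<le> 2 * x / pi" .
    have "n / cu \<le> n / cos y" using n0 cy0 cosU by (intro divide_left_mono) auto
    also have "\<dots> \<le> (2 * x / pi) / cos y" using a cy0 by (intro divide_right_mono) auto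
    also have "\<dots> = z" using sx by (simp add: z_def)
    finally show ?thesis by (simp add: zL_def)
  qed
  have zL1: "4/5 \<le> zL"
  proof -
    have "n \<le> n / cu" using n0 cu0 cu1 by (simp add: le_divide_eq)
    then show ?thesis using n0 unfolding zL_def by linarith
  qed
  define Rf :: "real \<Rightarrow> real" where "Rf w = 1 + w/2 - (3/2) * w^2" for w
  have RzL: "Rf z \<le> Rf zL"
  proof -
    have "Rf z - Rf zL = (z - zL) * (1/2 - (3/2) * (z + zL))"
      by (simp add: Rf_def field_simps power2_eq_square)
    also have "\<dots> \<le> 0" using zLz zL1 z0 by (intro mult_nonneg_nonpos) auto
    finally show ?thesis by simp
  qed
  have zr: "z^2 - z * (1 - z) / 2 \<le> z powr r"
  proof -
    have lnz: "1 - 1/z \<le> ln z"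
    proof -
      have "ln (1/z) \<le> 1/z - 1" using z0 by (intro ln_le_minus_one) auto
      then show ?thesis using z0 by (simp add: ln_div)
    qed
    have "1 + (r - 2) * (1 - 1/z) \<le> 1 + (r - 2) * ln z" using lnz r2 by (intro add_left_mono mult_left_mono) auto
    also have "\<dots> \<le> exp ((r - 2) * ln z)" by simp
    also have "\<dots> = z powr (r - 2)" using z0 by (simp add: powr_def)
    finally have a: "1 + (r - 2) * (1 - 1/z) \<le> z powr (r - 2)" .
    have "(r - 2) * (z * (1 - z)) \<le> (1/2) * (z * (1 - z))"
      using r2 z0 z1 by (intro mult_right_mono) auto
    then have "z^2 - z * (1 - z) / 2 \<le> z^2 - (r - 2) * (z * (1 - z))" by simp
    also have "\<dots> = z^2 * (1 + (r - 2) * (1 - 1/z))" using z0 by (simp add: field_simps power2_eq_square)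
    also have "\<dots> \<le> z^2 * z powr (r - 2)" using a by (intro mult_left_mono) auto
    also have "\<dots> = z powr 2 * z powr (r - 2)" using z0 by simp
    also have "\<dots> = z powr r" by (simp add: powr_add[symmetric])
    finally show ?thesis .
  qed
  define B where "B = x * cos x / sin x"
  have B0: "0 < B" using xpos c0 s0 by (simp add: B_def)
  have B1: "B \<le> 1"
  proof -
    have "x^3 * cos x < sin x ^ 3" using K1[OF xpos x1] .
    moreover have "(x * cos x)^3 \<le> x^3 * cos x"
    proof -
      have "cos x ^ 3 \<le> cos x" using c0 by (simp add: power_le_one power3_eq_cube mult_le_one)
      then show ?thesis using xpos by (simp add: power_mult_distrib)
    qed
    ultimately have "(x * cos x)^3 < sin x ^ 3" by simp
    then have "x * cos x < sin x" using s0 by (simp add: power_less_imp_less_base)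
    then show ?thesis using s0 by (simp add: B_def)
  qed
  have Bq: "B powr (2/3) \<le> B powr q0" using q0_bounds B0 B1 by (intro powr_mono') auto
  have T1: "(sin x / x) powr (4 * (-q0)) = 3 * z powr r"
  proof -
    have "(sin x / x) powr (4 * (-q0)) = inverse ((sin x / x) powr r)"
      by (simp add: powr_minus[symmetric] r_def)
    also have "\<dots> = (inverse (sin x / x)) powr r" by (rule inverse_powr[symmetric])
    also have "inverse (sin x / x) = (pi/2) * z" using s0 pi_gt3 by (simp add: z_def field_simps)
    also have "((pi/2) * z) powr r = (pi/2) powr r * z powr r" by (rule powr_mult)
    also have "\<dots> = 3 * z powr r" by (simp only: pi2r)
    finally show ?thesis .
  qed
  have T2: "(tan x / x) powr (-q0) = B powr q0"
  proof -
    have "(tan x / x) powr (-q0) = inverse ((tan x / x) powr q0)"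
      by (simp add: powr_minus[symmetric])
    also have "\<dots> = (inverse (tan x / x)) powr q0" by (rule inverse_powr[symmetric])
    also have "inverse (tan x / x) = B" using s0 c0 by (simp add: B_def tan_def field_simps)
    finally show ?thesis .
  qed
  have Gge: "1 - Rf z + (2/3) * B powr (2/3) \<le> G (-q0) x"
  proof -
    have "1 - Rf z = z^2 - z * (1 - z) / 2" by (simp add: Rf_def field_simps power2_eq_square)
    then show ?thesis unfolding G_def T1 T2 using zr Bq by simp
  qed
  have Bpos: "0 < B powr (2/3)" using B0 by simp
  show ?thesis
  proof (cases "Rf zL \<le> 0")
    case True
    then show ?thesis using Gge RzL Bpos by linarith
  next
    case False
    define Q where "Q = cu^2 + n * cu / 2 - (3/2) * n^2"
    have RQ: "Rf zL = Q / cu^2" using cu0 by (simp add: Rf_def zL_def Q_def field_simps power2_eq_square)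
    define Iv where "Iv = peval eI y"
    have Iv_eq: "Iv = (2 * 157^2 * 24^2) * Q"
      by (simp add: Iv_def eI_def Q_def cu_def n_def CUv_def Nv_def field_simps power2_eq_square del: ppow_numeral ppow_1)
    have R2: "0 < peval eR2 y" using y0 y1 by (intro pos_eR2) auto
    have R2v: "peval eR2 y = 8*169*(2*157^2*24^2)^3 * SLv^2 * CUv^4 - 27*100*36*24^4 * Iv^3"
      by (simp add: eR2_def Iv_def SLv_def CUv_def del: ppow_numeral ppow_1)
    have R2w: "peval eR2 y = 36*24^4*(2*157^2*24^2)^3 * (8*169*(sl^2*cu^4) - 2700 * Q^3)"
      unfolding R2v Iv_eq by (simp add: sl_def cu_def power_mult_distrib field_simps)
    have poly: "2700 * Q^3 < 8*169*(sl^2*cu^4)"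
    proof -
      have "0 < 8*169*(sl^2*cu^4) - 2700 * Q^3"
        using R2 unfolding R2w by (simp add: zero_less_mult_iff)
      then show ?thesis by simp
    qed
    define BL where "BL = (13/10) * sl / cu"
    have BLB: "BL \<le> B"
    proof -
      have "B = x * sin y / cos y" using sx cx by (simp add: B_def)
      have "(13/10) * sl \<le> x * sin y" using x0 sinL sl0 by (intro mult_mono) auto
      then have "(13/10) * sl / cu \<le> x * sin y / cu" using cu0 by (intro divide_right_mono) auto
      also have "\<dots> \<le> x * sin y / cos y" using cy0 cosU xpos sy0 by (intro divide_left_mono) auto
      finally show ?thesis using sx cx by (simp add: BL_def B_def)
    qed
    have BL0: "0 \<le> BL" using sl0 cu0 by (simp add: BL_def)
    have main: "Rf zL ^ 3 < (8/27) * B^2"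
    proof -
      have "Rf zL ^ 3 = Q^3 / cu^6" using RQ by (simp add: power_divide power_mult[symmetric])
      also have "\<dots> < (8*169/2700) * (sl^2*cu^4) / cu^6" using poly cu0 by (intro divide_strict_right_mono) auto
      also have "\<dots> = (8/27) * BL^2" using cu0 by (simp add: BL_def field_simps power2_eq_square eval_nat_numeral)
      also have "\<dots> \<le> (8/27) * B^2" using BLB BL0 by (simp add: power_mono)
      finally show ?thesis .
    qed
    have "Rf zL < (2/3) * B powr (2/3)"
    proof (rule ccontr)
      assume "\<not> ?thesis"
      then have "((2/3) * B powr (2/3))^3 \<le> Rf zL ^ 3" using Bpos by (intro power_mono) auto
      moreover have "((2/3) * B powr (2/3))^3 = (8/27) * B^2"
      proof -
        have "(B powr (2/3))^3 = B powr (real 3 * (2/3))" using B0 by (subst powr_power) auto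
        also have "\<dots> = B^2" using B0 by simp
        finally have b3: "(B powr (2/3))^3 = B^2" .
        have "((2/3) * B powr (2/3))^3 = (2/3)^3 * (B powr (2/3))^3" by (rule power_mult_distrib)
        also have "\<dots> = (8/27) * B^2" unfolding b3 by (simp add: power3_eq_cube)
        finally show ?thesis .
      qed
      ultimately show False using main by simp
    qed
    then show ?thesis using Gge RzL by linarith
  qed
qed

lemma K3:
  fixes x :: real assumes x0: "0 < x" and x1: "x < pi/2"
  shows "1 < G (-q0) x"
proof (cases "x \<le> 13/10")
  case True
  have R1: "1 < G (-1/2) x" using region1[OF x0 True] .
  define t where "t = 1 / (2 * q0)"
  have t0: "0 \<le> t" "t \<le> 1" using q0_bounds by (auto simp: t_def field_simps)
  have e: "t * (-q0) = -1/2" using q0_bounds by (simp add: t_def field_simps)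
  from Gconv[OF x0 x1 t0, of "-q0"] have "G (t * (-q0)) x \<le> (1 - t) + t * G (-q0) x" .
  then have "G (-1/2) x \<le> (1 - t) + t * G (-q0) x" by (simp only: e)
  then have "0 < t * (G (-q0) x - 1)" using R1 by (simp add: algebra_simps)
  then show ?thesis using t0 by (simp add: zero_less_mult_iff)
next
  case False
  then show ?thesis using region2[of x] x1 by simp
qed


lemma K4:
  fixes p :: real assumes p1: "-q0 < p" and p0: "p < 0"
  shows "\<exists>x. 0 < x \<and> x < pi/2 \<and> G p x < 1"
proof -
  define F where "F = at_left (pi/2::real)"
  have l1: "((\<lambda>x. sin x / x) \<longlongrightarrow> sin (pi/2) / (pi/2)) F"
    unfolding F_def by (intro tendsto_intros) auto
  then have l1': "((\<lambda>x. sin x / x) \<longlongrightarrow> 2/pi) F" by simp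
  have l2: "((\<lambda>x. (sin x / x) powr (4*p)) \<longlongrightarrow> (2/pi) powr (4*p)) F"
    using tendsto_powr[OF l1' tendsto_const] by simp
  have inv: "((\<lambda>x. 1 / x) \<longlongrightarrow> 1 / (pi/2)) F" unfolding F_def by (intro tendsto_intros) auto
  have "filterlim (\<lambda>x. (1/x) * tan x) at_top F"
    using filterlim_tendsto_pos_mult_at_top[OF inv _ filterlim_tan_at_left[folded F_def]] by simp
  then have "filterlim (\<lambda>x. tan x / x) at_top F" by simp
  then have l3: "((\<lambda>x. (tan x / x) powr p) \<longlongrightarrow> 0) F" using tendsto_neg_powr[OF p0] by blast
  have lim: "((\<lambda>x. G p x) \<longlongrightarrow> (1/3) * (2/pi) powr (4*p) + (2/3) * 0) F"
    unfolding G_def by (intro tendsto_intros l2 l3)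
  have val: "(1/3) * (2/pi) powr (4*p) + (2/3) * 0 < 1"
  proof -
    define L where "L = ln pi - ln 2"
    have L0: "0 < L" using Lpos by (simp add: L_def)
    have "(2/pi) powr (4*p) = exp (4 * p * ln (2/pi))" using pi_gt3 by (simp add: powr_def)
    also have "ln (2/pi) = - L" using pi_gt3 by (simp add: L_def ln_div)
    also have "4 * p * (- L) < ln 3"
    proof -
      have "- p * L < q0 * L" using p1 L0 by (intro mult_strict_right_mono) auto
      also have "q0 * L = ln 3 / 4" using L0 by (simp add: q0_def L_def[symmetric])
      finally show ?thesis by simp
    qed
    then have "exp (4 * p * (- L)) < exp (ln 3)" by (rule exp_less_mono)
    finally show ?thesis by simp
  qed
  have ev: "eventually (\<lambda>x. G p x < 1) F" using order_tendstoD(2)[OF lim val] .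
  then obtain b where b: "b < pi/2" "\<And>y. b < y \<Longrightarrow> y < pi/2 \<Longrightarrow> G p y < 1"
    unfolding F_def eventually_at_left_field by blast
  define x where "x = (max b 0 + pi/2) / 2"
  have "0 < x" "x < pi/2" "b < x" using b(1) pi_gt3 by (auto simp: x_def)
  then show ?thesis using b(2) by blast
qed

lemma exp_lb3:
  fixes w :: real assumes "0 \<le> w"
  shows "1 - w + w^2/2 - w^3/6 \<le> exp (-w)"
proof -
  obtain t where t: "exp (-w) = (\<Sum>m<4. (-w) ^ m / fact m) + exp t / fact 4 * (-w) ^ 4"
    using Maclaurin_exp_le[of "-w" 4] by blast
  have s: "(\<Sum>m<4. (-w) ^ m / fact m) = 1 - w + w^2/2 - w^3/6"
    by (simp add: lessThan_nat_numeral fact_numeral eval_nat_numeral)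
  have "0 \<le> exp t / fact 4 * (-w) ^ 4" by simp
  then show ?thesis using t s by simp
qed

definition Ep :: "real \<Rightarrow> real" where
  "Ep y = 1/15 - 5*y/432 + 13*y^2/14400 - y^3/28800 + y^4/1728000"
definition CLf :: "real \<Rightarrow> real" where
  "CLf y = 1 - y/2 + y^2/24 - y^3/720"

lemma K5_key:
  fixes x q :: real assumes x0: "0 < x" and x1: "x \<le> 1" and q0: "0 < q"
    and psi: "0 < q * (8 * (1/6 - x^2/120)^2 + (1/3 - x^2/24)^2) - 2 * Ep (x^2) / CLf (x^2) - q^2 * x^2 / 3"
  shows "1 < G (-q) x"
proof -
  have pi_lb: "3 < pi" using pi_gt3 .
  have xp: "x < pi/2" using x1 pi_lb by simp
  define y where "y = x^2"
  have y0: "0 < y" using x0 by (simp add: y_def)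
  have y1: "y \<le> 1" using x0 x1 by (simp add: y_def power_le_one)
  have s0: "0 < sin x" using x0 xp by (intro sin_gt_zero2)
  have c0: "0 < cos x" using x0 xp by (intro cos_gt_zero)
  have sU: "sin x \<le> x * (1 - y/6 + y^2/120)"
    using sin_ub5[of x] x0 x1 by (simp add: y_def field_simps eval_nat_numeral)
  have sL: "x * (1 - y/6) \<le> sin x"
    using sin_lb3[of x] x0 x1 by (simp add: y_def field_simps eval_nat_numeral)
  have cL: "CLf y \<le> cos x"
    using cos_lb6[of x] x0 xp by (simp add: CLf_def y_def field_simps eval_nat_numeral)
  have cU: "cos x \<le> 1 - y/2 + y^2/24"
    using cos_ub4[of x] x0 xp by (simp add: y_def field_simps eval_nat_numeral)
  have cL2: "1 - y/2 \<le> cos x"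
    using cos_lb2[of x] x0 xp by (simp add: y_def)
  have sx: "sin x \<le> x" using sin_x_le_x x0 by simp
  have yy: "y^2 \<le> y" using y0 y1 by (simp add: power2_eq_square mult_le_one)
  have yyy: "y^3 \<le> y^2" using y0 y1 by (simp add: power3_eq_cube power2_eq_square mult_le_one)
  have CL0: "0 < CLf y"
  proof -
    have "0 \<le> y^2" by simp
    then have "y^3/720 \<le> y^2/24" using yyy by linarith
    then show ?thesis unfolding CLf_def using y1 by linarith
  qed
  define \<alpha> where "\<alpha> = - ln (sin x / x)"
  define \<beta> where "\<beta> = ln (sin x / (x * cos x))"
  define \<delta> where "\<delta> = ln (sin x ^ 3 / (x^3 * cos x))"
  have rel: "4 * \<alpha> - 2 * \<beta> = - 2 * \<delta>"
    using s0 c0 x0 by (simp add: \<alpha>_def \<beta>_def \<delta>_def ln_div ln_mult ln_realpow algebra_simps)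
  define A0 where "A0 = y * (1/6 - y/120)"
  define B0 where "B0 = y * (1/3 - y/24)"
  have A00: "0 \<le> A0" using y0 y1 by (simp add: A0_def)
  have B00: "0 \<le> B0" using y0 y1 by (simp add: B0_def)
  have \<alpha>A: "A0 \<le> \<alpha>"
  proof -
    have "ln (sin x / x) \<le> sin x / x - 1" using s0 x0 by (intro ln_le_minus_one) auto
    moreover have "sin x / x \<le> 1 - y/6 + y^2/120" using sU x0 by (simp add: divide_le_eq mult.commute)
    moreover have "A0 = y/6 - y^2/120" by (simp add: A0_def algebra_simps power2_eq_square)
    ultimately show ?thesis unfolding \<alpha>_def by linarith
  qed
  have t1: "1 \<le> sin x / (x * cos x)"
  proof -
    have "x^3 * cos x < sin x ^ 3" using K1[OF x0 xp] .
    moreover have "(x * cos x)^3 \<le> x^3 * cos x"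
    proof -
      have "cos x ^ 3 \<le> cos x" using c0 by (simp add: power_le_one power3_eq_cube mult_le_one)
      then show ?thesis using x0 by (simp add: power_mult_distrib)
    qed
    ultimately have "(x * cos x)^3 < sin x ^ 3" by simp
    then have "x * cos x < sin x" using s0 by (simp add: power_less_imp_less_base)
    then show ?thesis using x0 c0 by simp
  qed
  have \<beta>B: "B0 \<le> \<beta>"
  proof -
    have "ln (x * cos x / sin x) \<le> x * cos x / sin x - 1" using s0 x0 c0 by (intro ln_le_minus_one) auto
    then have a: "1 - x * cos x / sin x \<le> \<beta>" using s0 x0 c0 by (simp add: \<beta>_def ln_div ln_mult)
    have d: "0 < 1 - y/6" using y1 by simp
    have "x * cos x / sin x \<le> x * (1 - y/2 + y^2/24) / (x * (1 - y/6))"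
      using cU sL x0 c0 d by (intro frac_le mult_left_mono) auto
    also have "\<dots> = (1 - y/2 + y^2/24) / (1 - y/6)" using x0 by simp
    finally have b: "1 - (1 - y/2 + y^2/24) / (1 - y/6) \<le> 1 - x * cos x / sin x" by simp
    have "1 - (1 - y/2 + y^2/24) / (1 - y/6) = B0 / (1 - y/6)" using d by (simp add: B0_def field_simps power2_eq_square)
    also have "\<dots> \<ge> B0" using d B00 y0 by (simp add: le_divide_eq mult_left_le)
    finally show ?thesis using a b by linarith
  qed
  have \<beta>0: "0 \<le> \<beta>" using t1 by (simp add: \<beta>_def)
  have \<beta>U: "\<beta> \<le> y"
  proof -
    have "\<beta> \<le> sin x / (x * cos x) - 1" using s0 x0 c0 by (simp add: \<beta>_def ln_le_minus_one)
    also have "\<dots> \<le> x / (x * cos x) - 1" using divide_right_mono[OF sx, of "x * cos x"] x0 c0 by simp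
    also have "\<dots> = 1 / cos x - 1" using x0 by simp
    also have "\<dots> \<le> y"
    proof -
      have "1 \<le> (1 + y) * cos x"
      proof -
        have "(1 + y) * (1 - y/2) \<le> (1 + y) * cos x" using cL2 y0 by (intro mult_left_mono) auto
        moreover have "1 \<le> (1 + y) * (1 - y/2)" using y0 y1 yy by (simp add: algebra_simps power2_eq_square)
        ultimately show ?thesis by linarith
      qed
      then show ?thesis using c0 by (simp add: divide_le_eq algebra_simps)
    qed
    finally show ?thesis .
  qed
  have \<delta>U: "\<delta> \<le> y^2 * Ep y / CLf y"
  proof -
    have "\<delta> \<le> sin x ^ 3 / (x^3 * cos x) - 1" using s0 x0 c0 by (simp add: \<delta>_def ln_le_minus_one)
    also have "\<dots> \<le> (x * (1 - y/6 + y^2/120))^3 / (x^3 * CLf y) - 1"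
      using sU s0 cL CL0 x0 by (intro diff_right_mono frac_le power_mono mult_left_mono) auto
    also have "\<dots> = (1 - y/6 + y^2/120)^3 / CLf y - 1" using x0 by (simp add: power_mult_distrib)
    also have "\<dots> = y^2 * Ep y / CLf y" using CL0 by (simp add: Ep_def CLf_def field_simps eval_nat_numeral)
    finally show ?thesis .
  qed
  have e1: "(sin x / x) powr (4 * (-q)) = exp (4 * q * \<alpha>)"
    using s0 x0 by (simp add: powr_def \<alpha>_def)
  have e2: "(tan x / x) powr (-q) = exp (- (q * \<beta>))"
    using s0 c0 x0 by (simp add: powr_def \<beta>_def tan_def field_simps)
  have x1b: "1 + 4*q*\<alpha> + (4*q*\<alpha>)^2/2 \<le> exp (4 * q * \<alpha>)"
    using A00 \<alpha>A q0 by (intro exp_lower_Taylor_quadratic) auto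
  have x2b: "1 - q*\<beta> + (q*\<beta>)^2/2 - (q*\<beta>)^3/6 \<le> exp (- (q * \<beta>))"
    using q0 \<beta>0 by (intro exp_lb3) auto
  have "1 + (q/3) * (4*\<alpha> - 2*\<beta>) + (q^2/3) * (8*\<alpha>^2 + \<beta>^2) - q^3 * \<beta>^3 / 9 \<le> G (-q) x"
    unfolding G_def e1 e2 using x1b x2b by (simp add: power_mult_distrib field_simps)
  moreover have "0 < (q/3) * (4*\<alpha> - 2*\<beta>) + (q^2/3) * (8*\<alpha>^2 + \<beta>^2) - q^3 * \<beta>^3 / 9"
  proof -
    have a2: "A0^2 \<le> \<alpha>^2" using A00 \<alpha>A by (intro power_mono) auto
    have b2: "B0^2 \<le> \<beta>^2" using B00 \<beta>B by (intro power_mono) auto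
    have b3: "\<beta>^3 \<le> y^3" using \<beta>0 \<beta>U by (intro power_mono) auto
    have "(q/3) * (4*\<alpha> - 2*\<beta>) \<ge> (q/3) * (-2 * (y^2 * Ep y / CLf y))"
      using rel \<delta>U q0 by (intro mult_left_mono) auto
    moreover have "(q^2/3) * (8*\<alpha>^2 + \<beta>^2) \<ge> (q^2/3) * (8*A0^2 + B0^2)"
      using a2 b2 by (intro mult_left_mono) auto
    moreover have "q^3 * \<beta>^3 / 9 \<le> q^3 * y^3 / 9" using b3 q0 by (intro divide_right_mono mult_left_mono) auto
    moreover have "0 < (q/3) * (-2 * (y^2 * Ep y / CLf y)) + (q^2/3) * (8*A0^2 + B0^2) - q^3 * y^3 / 9"
    proof -
      have "(q/3) * (-2 * (y^2 * Ep y / CLf y)) + (q^2/3) * (8*A0^2 + B0^2) - q^3 * y^3 / 9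
          = (q/3) * y^2 * (q * (8 * (1/6 - y/120)^2 + (1/3 - y/24)^2) - 2 * Ep y / CLf y - q^2 * y / 3)"
        by (simp add: A0_def B0_def field_simps power2_eq_square power3_eq_cube)
      moreover have "0 < (q/3) * y^2 * (q * (8 * (1/6 - y/120)^2 + (1/3 - y/24)^2) - 2 * Ep y / CLf y - q^2 * y / 3)"
        using psi q0 y0 by (simp add: y_def)
      ultimately show ?thesis by simp
    qed
    ultimately show ?thesis by linarith
  qed
  ultimately show ?thesis by linarith
qed

lemma K5:
  fixes p :: real assumes p: "p < -2/5"
  shows "\<exists>x. 0 < x \<and> x < pi/2 \<and> 1 < G p x"
proof -
  define q where "q = -p"
  have q25: "2/5 < q" using p by (simp add: q_def)
  define \<Psi> where "\<Psi> x = q * (8 * (1/6 - x^2/120)^2 + (1/3 - x^2/24)^2) - 2 * Ep (x^2) / CLf (x^2) - q^2 * x^2 / 3" for x :: real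
  have cont: "((\<lambda>x. \<Psi> x) \<longlongrightarrow> \<Psi> 0) (at_right 0)"
    unfolding \<Psi>_def Ep_def CLf_def by (intro tendsto_intros) auto
  have "\<Psi> 0 = q / 3 - 2/15" by (simp add: \<Psi>_def Ep_def CLf_def power2_eq_square)
  then have "0 < \<Psi> 0" using q25 by simp
  then have "eventually (\<lambda>x. 0 < \<Psi> x) (at_right 0)" using order_tendstoD(1)[OF cont] by blast
  then obtain b where b: "0 < b" "\<And>x. 0 < x \<Longrightarrow> x < b \<Longrightarrow> 0 < \<Psi> x"
    unfolding eventually_at_right_field by auto
  define x where "x = min (b/2) 1"
  have x0: "0 < x" "x \<le> 1" "x < b" using b(1) by (auto simp: x_def)
  have "1 < G (-q) x" using K5_key[OF x0(1) x0(2), of q] b(2)[OF x0(1) x0(3)] q25 by (simp add: \<Psi>_def)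
  moreover have "x < pi/2" using x0 pi_gt3 by simp
  ultimately show ?thesis using x0 by (auto simp: q_def)
qed


lemma Ineg:
  fixes p x :: real assumes p: "p \<le> -q0" and x0: "0 < x" and x1: "x < pi/2"
  shows "1 < G p x"
proof -
  have q: "1/2 \<le> q0" using q0_bounds by simp
  have p0: "p < 0" using p q by simp
  define t where "t = -q0 / p"
  have t0: "0 \<le> t" "t \<le> 1" using p p0 q by (auto simp: t_def field_simps)
  have tp: "t * p = -q0" using p0 by (simp add: t_def)
  have tpos: "0 < t" using p0 q by (simp add: t_def field_simps)
  from Gconv[OF x0 x1 t0, of p] have "G (t * p) x \<le> (1 - t) + t * G p x" .
  then have "G (-q0) x \<le> (1 - t) + t * G p x" by (simp only: tp)
  then have "0 < t * (G p x - 1)" using K3[OF x0 x1] by (simp add: algebra_simps)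
  then show ?thesis using tpos by (simp add: zero_less_mult_iff)
qed

lemma IIneg:
  fixes p x :: real assumes p: "-2/5 \<le> p" "p < 0" and x0: "0 < x" and x1: "x < pi/2"
  shows "G p x < 1"
proof -
  define t where "t = p / (-2/5)"
  have t0: "0 \<le> t" "t \<le> 1" using p by (auto simp: t_def field_simps)
  have tp: "t * (-2/5) = p" by (simp add: t_def)
  from Gconv[OF x0 x1 t0, of "-2/5"] have "G (t * (-2/5)) x \<le> (1 - t) + t * G (-2/5) x" .
  then have a: "G p x \<le> (1 - t) + t * G (-2/5) x" by (simp only: tp)
  have "t * G (-2/5) x < t * 1" using K2[OF x0 x1] p by (intro mult_strict_left_mono) (auto simp: t_def field_simps)
  then show ?thesis using a by simp
qed

theorem proposition4p12:
  fixes p :: real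
  assumes "p \<noteq> 0"
  shows "((\<forall>x::real. 0 < x \<and> x < pi / 2 \<longrightarrow>
             (1/3) * (sin x / x) powr (4 * p) + (2/3) * (tan x / x) powr p > 1)
          \<longleftrightarrow> (p > 0 \<or> p \<le> - (ln 3 / (4 * (ln pi - ln 2)))))
       \<and> ((\<forall>x::real. 0 < x \<and> x < pi / 2 \<longrightarrow>
             (1/3) * (sin x / x) powr (4 * p) + (2/3) * (tan x / x) powr p < 1)
          \<longleftrightarrow> (-2/5 \<le> p \<and> p < 0))"
proof -
  have eqG: "\<And>x. (1/3) * (sin x / x) powr (4 * p) + (2/3) * (tan x / x) powr p = G p x"
    by (simp add: G_def)
  have eqq: "- (ln 3 / (4 * (ln pi - ln 2))) = -q0" by (simp add: q0_def)
  have q: "1/2 \<le> q0" using q0_bounds by simp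
  have pi2: "1 < pi/2" using pi_gt3 by simp
  have I: "(\<forall>x::real. 0 < x \<and> x < pi / 2 \<longrightarrow> 1 < G p x) \<longleftrightarrow> (p > 0 \<or> p \<le> -q0)"
  proof
    assume H: "\<forall>x::real. 0 < x \<and> x < pi / 2 \<longrightarrow> 1 < G p x"
    show "p > 0 \<or> p \<le> -q0"
    proof (rule ccontr)
      assume "\<not> (p > 0 \<or> p \<le> -q0)"
      then have "-q0 < p" "p < 0" using assms by auto
      then obtain x where x: "0 < x" "x < pi/2" "G p x < 1" using K4 by blast
      then have "1 < G p x" using H[rule_format, of x] by simp
      then show False using x(3) by simp
    qed
  next
    assume "p > 0 \<or> p \<le> -q0"
    then show "\<forall>x::real. 0 < x \<and> x < pi / 2 \<longrightarrow> 1 < G p x"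
    proof
      assume "p > 0" then show ?thesis using Gpos by simp
    next
      assume "p \<le> -q0" then show ?thesis using Ineg by simp
    qed
  qed
  have II: "(\<forall>x::real. 0 < x \<and> x < pi / 2 \<longrightarrow> G p x < 1) \<longleftrightarrow> (-2/5 \<le> p \<and> p < 0)"
  proof
    assume H: "\<forall>x::real. 0 < x \<and> x < pi / 2 \<longrightarrow> G p x < 1"
    have "\<not> p > 0"
    proof
      assume "p > 0"
      then have "1 < G p 1" using Gpos[of 1 p] pi2 by simp
      moreover have "G p 1 < 1" using H[rule_format, of 1] pi2 by simp
      ultimately show False by simp
    qed
    moreover have "\<not> p < -2/5"
    proof
      assume "p < -2/5"
      then obtain x where x: "0 < x" "x < pi/2" "1 < G p x" using K5 by blast
      then have "G p x < 1" using H[rule_format, of x] by simp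
      then show False using x(3) by simp
    qed
    ultimately show "-2/5 \<le> p \<and> p < 0" using assms by auto
  next
    assume "-2/5 \<le> p \<and> p < 0"
    then show "\<forall>x::real. 0 < x \<and> x < pi / 2 \<longrightarrow> G p x < 1" using IIneg by simp
  qed
  show ?thesis unfolding eqG eqq using I II by simp
qed


end
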